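(* Let $\alpha>0$. The constraints of the optimization problem below (namely $Q>0$, $U>0$, $\Delta(Q)<0$, $\mathrm{He}\begin{bmatrix}\alpha Q+AQ+BW & B(X-U)\\ W+Y & X-U\end{bmatrix}<0$ and $\begin{bmatrix}\bar u^2 & Y\\ Y^\top & Q\end{bmatrix}\geq 0$) are feasible if and only if $\alpha>\omega$.
   Context: Let $g>0$ (gravity acceleration), $z_c>0$ (constant center-of-mass height) and $\omega:=\sqrt{g/z_c}$. Let $A:=\begin{bmatrix}0&1\\ \omega^2&0\end{bmatrix}$ and $B:=\begin{bmatrix}0\\ -\omega^2\end{bmatrix}$ (linear inverted pendulum dynamics $\dot x=Ax+Bu$). Let $\bar r>0$ (half-step size), $\bar v>0$ (peak forward speed) and $T>0$ (step period) be related by $\bar v=\omega\bar r\,\frac{\cosh(\omega T)+1}{\sinh(\omega T)}$, equivalently $T=\frac1\omega\ln\!\big(\frac{\bar v/\omega+\bar r}{\bar v/\omega-\bar r}\big)$; in particular $\bar v/\omega-\bar r>0$. Define $\xi:=\frac{\bar r\omega}{\bar v/\omega-\bar r}>0$, and let $\bar u>0$ (saturation level, half of the foot length). For $M$ square, $\mathrm{He}(M):=M+M^\top$. Consider the convex problem: maximize $\log\det(Q)$ over a symmetric $Q=\begin{bmatrix}q_{11}&q_{12}\\ q_{12}&q_{22}\end{bmatrix}\in\mathbb R^{2\times2}$, row vectors $W,Y\in\mathbb R^{1\times 2}$ and scalars $U,X\in\mathbb R$, subject to $Q>0$, $U>0$, $\Delta(Q)<0$, $\mathrm{He}\begin{bmatrix}\alpha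 Q+AQ+BW & B(X-U)\\ W+Y & X-U\end{bmatrix}<0$, $\begin{bmatrix}\bar u^2 & Y\\ Y^\top & Q\end{bmatrix}\geq0$, where $\Delta(Q):=\begin{bmatrix}\Delta_{11}&\Delta_{12}\\ \Delta_{12}&\Delta_{22}\end{bmatrix}$ with $\Delta_{11}:=(\mathrm{e}^{2(\omega-\alpha)T}-1)q_{22}+4\mathrm{e}^{-2\alpha T}\xi(\xi q_{11}-\mathrm{e}^{\omega T}q_{12})$, $\Delta_{12}:=2\mathrm{e}^{-2\alpha T}\xi q_{11}+(\mathrm{e}^{-(\omega+2\alpha)T}-1)q_{12}$, $\Delta_{22}:=(\mathrm{e}^{-2\alpha T}-1)q_{11}$. *)

theory Defs
  imports "HOL-Analysis.Analysis"
begin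

(* Matrix sign conditions (applied only to symmetric matrices below):
   M > 0, M >= 0, M < 0 in the usual quadratic-form sense. *)
definition pos_def_mat :: "real^'n^'n \<Rightarrow> bool" where
  "pos_def_mat M \<longleftrightarrow> (\<forall>x. x \<noteq> 0 \<longrightarrow> x \<bullet> (M *v x) > 0)"

definition psd_mat :: "real^'n^'n \<Rightarrow> bool" where
  "psd_mat M \<longleftrightarrow> (\<forall>x. x \<bullet> (M *v x) \<ge> 0)"

definition neg_def_mat :: "real^'n^'n \<Rightarrow> bool" where
  "neg_def_mat M \<longleftrightarrow> (\<forall>x. x \<noteq> 0 \<longrightarrow> x \<bullet> (M *v x) < 0)"

definition He :: "real^'n^'n \<Rightarrow> real^'n^'n" where
  "He M = M + transpose M"

definition mat2 :: "real \<Rightarrow> real \<Rightarrow> real \<Rightarrow> real \<Rightarrow> real^2^2" where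
  "mat2 a b c d = vector [vector [a, b], vector [c, d]]"

definition blk3 :: "real^2^2 \<Rightarrow> real^2 \<Rightarrow> real^2 \<Rightarrow> real \<Rightarrow> real^3^3" where
  "blk3 P b c d = vector [vector [P$1$1, P$1$2, b$1],
                          vector [P$2$1, P$2$2, b$2],
                          vector [c$1, c$2, d]]"

definition outer2 :: "real^2 \<Rightarrow> real^2 \<Rightarrow> real^2^2" where
  "outer2 b w = (\<chi> i j. b$i * w$j)"

definition lipA :: "real \<Rightarrow> real^2^2" where
  "lipA \<omega> = mat2 0 1 (\<omega>^2) 0"

definition lipB :: "real \<Rightarrow> real^2" where
  "lipB \<omega> = vector [0, - (\<omega>^2)]"

definition Delta :: "real \<Rightarrow> real \<Rightarrow> real \<Rightarrow> real \<Rightarrow> real \<Rightarrow> real \<Rightarrow> real \<Rightarrow> real^2^2" where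
  "Delta \<alpha> \<omega> T \<xi> q11 q12 q22 =
    (let d11 = (exp (2*(\<omega> - \<alpha>)*T) - 1) * q22
               + 4 * exp (-2*\<alpha>*T) * \<xi> * (\<xi> * q11 - exp (\<omega>*T) * q12);
         d12 = 2 * exp (-2*\<alpha>*T) * \<xi> * q11 + (exp (-(\<omega> + 2*\<alpha>)*T) - 1) * q12;
         d22 = (exp (-2*\<alpha>*T) - 1) * q11
     in mat2 d11 d12 d12 d22)"

definition lmi_feasible :: "real \<Rightarrow> real \<Rightarrow> real \<Rightarrow> real \<Rightarrow> real \<Rightarrow> bool" where
  "lmi_feasible \<alpha> \<omega> T \<xi> ubar \<longleftrightarrow>
    (\<exists>q11 q12 q22 (W::real^2) (Y::real^2) (U::real) (X::real).
       let Q = mat2 q11 q12 q12 q22 in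
       pos_def_mat Q \<and> U > 0 \<and>
       neg_def_mat (Delta \<alpha> \<omega> T \<xi> q11 q12 q22) \<and>
       neg_def_mat (He (blk3 (\<alpha> *\<^sub>R Q + lipA \<omega> ** Q + outer2 (lipB \<omega>) W)
                             ((X - U) *\<^sub>R lipB \<omega>) (W + Y) (X - U))) \<and>
       psd_mat (vector [vector [ubar^2, Y$1, Y$2],
                        vector [Y$1, Q$1$1, Q$1$2],
                        vector [Y$2, Q$2$1, Q$2$2]] :: real^3^3))"

end

theory Submission
  imports Defs
begin

lemma mat2_nth[simp]: "mat2 a b c d $1$1 = a" "mat2 a b c d $1$2 = b" "mat2 a b c d $2$1 = c" "mat2 a b c d $2$2 = d"
  by (simp_all add: mat2_def)

lemma lipB_nth[simp]: "lipB \<omega> $1 = 0" "lipB \<omega> $2 = -(\<omega>^2)" by (simp_all add: lipB_def)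

lemma qf2: "x \<bullet> (mat2 a b c d *v x) = a*(x$1)^2 + (b+c)*(x$1*x$2) + d*(x$2)^2"
  by (simp add: mat2_def inner_vec_def matrix_vector_mult_def sum_2 algebra_simps power2_eq_square)

lemma qf3: "x \<bullet> ((vector [vector[a,b,c], vector[d,e,f], vector[g,h,k]] :: real^3^3) *v x)
  = a*(x$1)^2 + e*(x$2)^2 + k*(x$3)^2 + (b+d)*(x$1*x$2) + (c+g)*(x$1*x$3) + (f+h)*(x$2*x$3)"
  by (simp add: inner_vec_def matrix_vector_mult_def sum_3 algebra_simps power2_eq_square)

lemma He_blk3: "He (blk3 P b c d) = vector [vector[2*P$1$1, P$1$2+P$2$1, b$1+c$1],
   vector[P$2$1+P$1$2, 2*P$2$2, b$2+c$2], vector[c$1+b$1, c$2+b$2, 2*d]]"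
  by (simp add: He_def blk3_def vec_eq_iff forall_3 transpose_def)

lemma P_entries:
  "(\<alpha> *\<^sub>R mat2 q11 q12 q12 q22 + lipA \<omega> ** mat2 q11 q12 q12 q22 + outer2 (lipB \<omega>) W) =
    mat2 (\<alpha>*q11 + q12) (\<alpha>*q12+q22) (\<alpha>*q12 + \<omega>^2*q11 - \<omega>^2*W$1) (\<alpha>*q22 + \<omega>^2*q12 - \<omega>^2*W$2)"
  by (simp add: vec_eq_iff forall_2 lipA_def lipB_def outer2_def matrix_matrix_mult_def sum_2 mat2_def)

lemma v2_nz: "(vector [1, 0] :: real^2) \<noteq> 0" "(vector [0, 1] :: real^2) \<noteq> 0"
  by (simp_all add: vec_eq_iff forall_2)

lemma v3_nz: "(vector [1, 0, 0] :: real^3) \<noteq> 0"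
  by (simp add: vec_eq_iff forall_3)

lemma nz2: "(x::real^2) \<noteq> 0 \<Longrightarrow> x$1 \<noteq> 0 \<or> x$2 \<noteq> 0"
  by (auto simp: vec_eq_iff forall_2)

lemma nz3: "(x::real^3) \<noteq> 0 \<Longrightarrow> x$1 \<noteq> 0 \<or> x$2 \<noteq> 0 \<or> x$3 \<noteq> 0"
  by (auto simp: vec_eq_iff forall_3)

lemma quad_nonneg:
  fixes c e f t p :: real
  assumes "c > 0" "e^2 \<le> c * f"
  shows "c*t^2 + 2*e*t*p + f*p^2 \<ge> 0"
proof -
  have "c * (c*t^2 + 2*e*t*p + f*p^2) = (c*t + e*p)^2 + (c*f - e^2)*p^2"
    by (simp add: algebra_simps power2_eq_square)
  also have "\<dots> \<ge> 0" using assms by simp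
  finally show ?thesis using assms(1) by (simp add: zero_le_mult_iff)
qed

lemma quad_pos:
  fixes a b c x y :: real
  assumes "a > 0" "a*c - b^2 > 0" "x \<noteq> 0 \<or> y \<noteq> 0"
  shows "a*x^2 + 2*b*(x*y) + c*y^2 > 0"
proof -
  have e: "a * (a*x^2 + 2*b*(x*y) + c*y^2) = (a*x + b*y)^2 + (a*c - b^2)*y^2"
    by (simp add: algebra_simps power2_eq_square)
  have "(a*x + b*y)^2 + (a*c - b^2)*y^2 > 0"
  proof (cases "y = 0")
    case True then have "x \<noteq> 0" using assms by auto
    then show ?thesis using True assms by simp
  next
    case False then show ?thesis using assms
      by (simp add: add_nonneg_pos)
  qed
  then show ?thesis using e assms(1) by (metis zero_less_mult_pos)
qed

lemma pos2: "a > 0 \<Longrightarrow> a*c - b^2 > 0 \<Longrightarrow> pos_def_mat (mat2 a b b c)"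
proof -
  assume h: "a > 0" "a*c - b^2 > 0"
  show ?thesis unfolding pos_def_mat_def qf2
  proof (intro allI impI)
    fix x :: "real^2" assume "x \<noteq> 0"
    then have "x$1 \<noteq> 0 \<or> x$2 \<noteq> 0" by (rule nz2)
    then have "a*(x$1)^2 + 2*b*(x$1*x$2) + c*(x$2)^2 > 0"
      using quad_pos[of a c b] h by simp
    then show "a*(x$1)^2 + (b+b)*(x$1*x$2) + c*(x$2)^2 > 0" by simp
  qed
qed

lemma neg2: "a < 0 \<Longrightarrow> a*c - b^2 > 0 \<Longrightarrow> neg_def_mat (mat2 a b b c)"
proof -
  assume h: "a < 0" "a*c - b^2 > 0"
  show ?thesis unfolding neg_def_mat_def qf2
  proof (intro allI impI)
    fix x :: "real^2" assume "x \<noteq> 0"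
    then have "x$1 \<noteq> 0 \<or> x$2 \<noteq> 0" by (rule nz2)
    then have "(-a)*(x$1)^2 + 2*(-b)*(x$1*x$2) + (-c)*(x$2)^2 > 0"
      using quad_pos[of "-a" "-c" "-b"] h by simp
    then show "a*(x$1)^2 + (b+b)*(x$1*x$2) + c*(x$2)^2 < 0" by simp
  qed
qed

lemma neg3:
  fixes a b c d e f g h k :: real
  assumes "a < 0" "e < 0" "k < 0" "b + d = 0" "c + g = 0" "f + h = 0"
  shows "neg_def_mat (vector [vector[a,b,c], vector[d,e,f], vector[g,h,k]] :: real^3^3)"
  unfolding neg_def_mat_def qf3
proof (intro allI impI)
  fix x :: "real^3" assume "x \<noteq> 0"
  then have nz: "x$1 \<noteq> 0 \<or> x$2 \<noteq> 0 \<or> x$3 \<noteq> 0" by (rule nz3)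
  have "a*(x$1)^2 \<le> 0" "e*(x$2)^2 \<le> 0" "k*(x$3)^2 \<le> 0"
    using assms by (simp_all add: mult_nonpos_nonneg)
  moreover have "a*(x$1)^2 < 0 \<or> e*(x$2)^2 < 0 \<or> k*(x$3)^2 < 0"
    using nz assms by (auto simp: mult_neg_pos)
  ultimately show "a*(x$1)^2 + e*(x$2)^2 + k*(x$3)^2 + (b+d)*(x$1*x$2) + (c+g)*(x$1*x$3) + (f+h)*(x$2*x$3) < 0"
    using assms by auto
qed

lemma xi_nonneg:
  fixes g zc rbar vbar T \<omega> \<xi> :: real
  assumes "g > 0" and "zc > 0"
    and "\<omega> = sqrt (g / zc)"
    and "rbar > 0" and "T > 0"
    and "vbar = \<omega> * rbar * (cosh (\<omega> * T) + 1) / sinh (\<omega> * T)"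
    and "\<xi> = rbar * \<omega> / (vbar / \<omega> - rbar)"
  shows "\<omega> > 0" "\<xi> \<ge> 0"
proof -
  show w: "\<omega> > 0" using assms by simp
  have s: "sinh (\<omega> * T) > 0" using w assms by simp
  have c: "cosh (\<omega> * T) - sinh (\<omega> * T) > 0" by (simp add: cosh_minus_sinh)
  have "vbar / \<omega> = rbar * (cosh (\<omega> * T) + 1) / sinh (\<omega> * T)"
    using assms(6) w by simp
  also have "\<dots> > rbar"
  proof -
    have "rbar * sinh (\<omega> * T) < rbar * cosh (\<omega> * T)"
      using c assms(4) by (intro mult_strict_left_mono) auto
    moreover have "rbar * (cosh (\<omega> * T) + 1) = rbar * cosh (\<omega> * T) + rbar"
      by (simp add: algebra_simps)
    ultimately have "rbar * sinh (\<omega> * T) < rbar * (cosh (\<omega> * T) + 1)"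
      using assms(4) by linarith
    then show ?thesis using s by (intro mult_imp_less_div_pos) auto
  qed
  finally have "vbar / \<omega> - rbar > 0" by simp
  then show "\<xi> \<ge> 0" using assms(4) w assms(7) by simp
qed

lemma necessity:
  fixes q11 q12 q22 e1 a E \<xi> \<alpha> :: real
  assumes "q11 > 0" "q22 > 0" "\<alpha> > 0" "\<alpha>*q11 + q12 < 0" "\<xi> \<ge> 0" "E > 0" "a > 0" "e1 \<ge> 1"
  shows "(e1 - 1) * q22 + 4 * a * \<xi> * (\<xi> * q11 - E * q12) \<ge> 0"
proof -
  have "q12 < 0" using assms by (smt (verit) mult_pos_pos)
  then have "\<xi> * q11 - E * q12 \<ge> 0" using assms by (smt (verit) mult_nonneg_nonneg mult_pos_neg)
  then show ?thesis using assms by simp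
qed

lemma sufficiency:
  fixes T ubar \<alpha> \<omega> \<xi> :: real
  assumes w: "\<omega> > 0" and al: "\<alpha> > \<omega>" and xi: "\<xi> \<ge> 0" and T: "T > 0" and u: "ubar > 0"
  shows "lmi_feasible \<alpha> \<omega> T \<xi> ubar"
proof -
  define a where "a = exp (-2*\<alpha>*T)"
  define e1 where "e1 = exp (2*(\<omega> - \<alpha>)*T)"
  define E where "E = exp (\<omega>*T)"
  define e3 where "e3 = exp (-(\<omega> + 2*\<alpha>)*T)"
  define \<beta> where "\<beta> = \<alpha> + 1"
  define D12 where "D12 = 2*a*\<xi> - (e3 - 1)*\<beta>"
  define K where "K = D12^2/(1-a) + 1 + \<beta>^2"
  define P where "P = 4*a*\<xi>*(\<xi> + E*\<beta>)"
  define N where "N = (P + K)/(1-e1)"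
  define w1 where "w1 = (N - 2*\<alpha>*\<beta> + \<omega>^2)/\<omega>^2"
  define w2 where "w2 = \<alpha>*N/\<omega>^2"
  define y1 where "y1 = - w1"
  define y2 where "y2 = - w2 - \<omega>^2"
  define A where "A = y1"
  define B where "B = y1*\<beta> + y2"
  define lam where "lam = ubar^2/(2*(A^2 + B^2 + 1))"
  have a0: "a > 0" and a1: "a < 1" using assms unfolding a_def by auto
  have e10: "e1 > 0" and e11: "e1 < 1" using assms unfolding e1_def by (auto intro!: mult_neg_pos)
  have E0: "E > 0" unfolding E_def by simp
  have b0: "\<beta> > 0" using assms unfolding \<beta>_def by simp
  have P0: "P \<ge> 0" unfolding P_def using a0 xi E0 b0 by simp
  have K1: "K \<ge> 1 + \<beta>^2" unfolding K_def using a1 by simp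
  have NK: "N \<ge> K"
  proof -
    have "K \<le> P + K" using P0 by simp
    also have "P + K \<le> (P + K)/(1-e1)" using e10 e11 P0 K1
      by (simp add: le_divide_eq) (smt (verit) mult_le_cancel_left1 zero_le_power2)
    finally show ?thesis unfolding N_def .
  qed
  have eqN: "(e1 - 1)*N = -(P + K)" unfolding N_def using e11 by (simp add: field_simps)
  have den: "A^2 + B^2 + 1 > 0" by (simp add: add_nonneg_pos)
  have lam0: "lam > 0" unfolding lam_def using u den by simp
  have lamA: "lam*(A^2 + B^2 + 1) = ubar^2/2" unfolding lam_def using den by (simp add: field_simps)
  have ww1: "\<omega>^2 * w1 = N - 2*\<alpha>*\<beta> + \<omega>^2" unfolding w1_def using w by simp
  have ww2: "\<omega>^2 * w2 = \<alpha>*N" unfolding w2_def using w by simp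
  have HQ: "pos_def_mat (mat2 lam (-lam*\<beta>) (-lam*\<beta>) (lam*N))"
  proof (rule pos2)
    show "lam > 0" by (rule lam0)
    have "lam*(lam*N) - (-lam*\<beta>)^2 = lam^2 * (N - \<beta>^2)" by (simp add: algebra_simps power2_eq_square)
    moreover have "N - \<beta>^2 > 0" using NK K1 by simp
    ultimately show "lam*(lam*N) - (-lam*\<beta>)^2 > 0" using lam0 by simp
  qed
  have HD: "neg_def_mat (Delta \<alpha> \<omega> T \<xi> lam (-lam*\<beta>) (lam*N))"
  proof -
    have x11: "(e1 - 1) * (lam*N) + 4*a*\<xi>*(\<xi>*lam - E*(-lam*\<beta>)) = -lam*K"
    proof -
      have "(e1 - 1) * (lam*N) + 4*a*\<xi>*(\<xi>*lam - E*(-lam*\<beta>)) = lam*((e1-1)*N + P)"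
        unfolding P_def by (simp add: algebra_simps)
      then show ?thesis using eqN by simp
    qed
    have x12: "2*a*\<xi>*lam + (e3 - 1)*(-lam*\<beta>) = lam*D12" unfolding D12_def by (simp add: algebra_simps)
    have "Delta \<alpha> \<omega> T \<xi> lam (-lam*\<beta>) (lam*N) = mat2 (-lam*K) (lam*D12) (lam*D12) (lam*(a-1))"
      unfolding Delta_def Let_def a_def[symmetric] e1_def[symmetric] E_def[symmetric] e3_def[symmetric] x11 x12
      by (simp add: algebra_simps)
    moreover have "neg_def_mat (mat2 (-lam*K) (lam*D12) (lam*D12) (lam*(a-1)))"
    proof (rule neg2)
      have K0: "K > 0" using K1 zero_le_power2[of \<beta>] by linarith
      show "-lam*K < 0" using lam0 K0 by simp
      have "K*(1-a) = D12^2 + (1+\<beta>^2)*(1-a)" unfolding K_def using a1 by (simp add: field_simps)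
      then have "K*(1-a) - D12^2 = (1+\<beta>^2)*(1-a)" by simp
      also have "\<dots> > 0" using a1 by (simp add: add_pos_nonneg)
      finally have k: "K*(1-a) - D12^2 > 0" .
      have "(-lam*K)*(lam*(a-1)) - (lam*D12)^2 = lam^2*(K*(1-a) - D12^2)"
        by (simp add: algebra_simps power2_eq_square)
      then show "(-lam*K)*(lam*(a-1)) - (lam*D12)^2 > 0" using k lam0 by simp
    qed
    ultimately show ?thesis by simp
  qed
  have HH: "neg_def_mat (He (blk3 (\<alpha> *\<^sub>R mat2 lam (-lam*\<beta>) (-lam*\<beta>) (lam*N) + lipA \<omega> ** mat2 lam (-lam*\<beta>) (-lam*\<beta>) (lam*N)
        + outer2 (lipB \<omega>) (lam *\<^sub>R vector [w1, w2]))
        ((0 - lam) *\<^sub>R lipB \<omega>) (lam *\<^sub>R vector [w1, w2] + lam *\<^sub>R vector [y1, y2]) (0 - lam)))"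
    unfolding He_blk3 P_entries
    apply (rule neg3)
    apply (simp_all add: algebra_simps y1_def y2_def lam0)
    subgoal using lam0 by (simp add: \<beta>_def)
    subgoal
    proof -
      have e: "lam * (w2 * (2 * \<omega>\<^sup>2)) = N * (\<alpha> * (lam * 2))" using ww2 by (simp add: algebra_simps)
      have "0 < \<beta> * (lam * (2 * \<omega>\<^sup>2))" using b0 lam0 w by simp
      then show ?thesis using e by linarith
    qed
    subgoal
    proof -
      have e: "lam * (w1 * (2 * \<omega>\<^sup>2)) = 2 * lam * (N - 2 * \<alpha> * \<beta> + \<omega>\<^sup>2)" using ww1
        by (metis mult.commute mult.left_commute)
      show ?thesis unfolding e by (simp add: algebra_simps)
    qed
    done
  have HP: "psd_mat (vector [vector [ubar^2, (lam *\<^sub>R vector [y1, y2] :: real^2)$1, (lam *\<^sub>R vector [y1, y2] :: real^2)$2],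
                        vector [(lam *\<^sub>R vector [y1, y2] :: real^2)$1, mat2 lam (-lam*\<beta>) (-lam*\<beta>) (lam*N)$1$1, mat2 lam (-lam*\<beta>) (-lam*\<beta>) (lam*N)$1$2],
                        vector [(lam *\<^sub>R vector [y1, y2] :: real^2)$2, mat2 lam (-lam*\<beta>) (-lam*\<beta>) (lam*N)$2$1, mat2 lam (-lam*\<beta>) (-lam*\<beta>) (lam*N)$2$2]] :: real^3^3)"
    proof (unfold psd_mat_def, intro allI)
    fix x :: "real^3"
    define t where "t = x$1"
    define z1 where "z1 = x$2"
    define z2 where "z2 = x$3"
    define p where "p = z1 - \<beta>*z2"
    have u2: "ubar^2/2 > 0" using u by simp
    have lA: "lam*A^2 \<le> ubar^2/2" using lamA lam0 by (smt (verit) mult_left_mono zero_le_power2 distrib_left)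
    have lB: "lam*B^2 \<le> ubar^2/2" using lamA lam0 by (smt (verit) mult_left_mono zero_le_power2 distrib_left)
    have Q1: "ubar^2/2 * t^2 + 2*(lam*A)*t*p + lam*p^2 \<ge> 0"
    proof (rule quad_nonneg[OF u2])
      have "(lam*A)^2 = lam*(lam*A^2)" by (simp add: power2_eq_square)
      also have "\<dots> \<le> lam*(ubar^2/2)" using lA lam0 by simp
      finally show "(lam*A)^2 \<le> ubar^2/2 * lam" by (simp add: mult.commute)
    qed
    have Q2: "ubar^2/2 * t^2 + 2*(lam*B)*t*z2 + lam*z2^2 \<ge> 0"
    proof (rule quad_nonneg[OF u2])
      have "(lam*B)^2 = lam*(lam*B^2)" by (simp add: power2_eq_square)
      also have "\<dots> \<le> lam*(ubar^2/2)" using lB lam0 by simp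
      finally show "(lam*B)^2 \<le> ubar^2/2 * lam" by (simp add: mult.commute)
    qed
    have Q3: "lam*(N - \<beta>^2 - 1)*z2^2 \<ge> 0" using lam0 NK K1 by simp
    have "x \<bullet> ((vector [vector [ubar^2, (lam *\<^sub>R vector [y1, y2] :: real^2)$1, (lam *\<^sub>R vector [y1, y2] :: real^2)$2],
                        vector [(lam *\<^sub>R vector [y1, y2] :: real^2)$1, mat2 lam (-lam*\<beta>) (-lam*\<beta>) (lam*N)$1$1, mat2 lam (-lam*\<beta>) (-lam*\<beta>) (lam*N)$1$2],
                        vector [(lam *\<^sub>R vector [y1, y2] :: real^2)$2, mat2 lam (-lam*\<beta>) (-lam*\<beta>) (lam*N)$2$1, mat2 lam (-lam*\<beta>) (-lam*\<beta>) (lam*N)$2$2]] :: real^3^3) *v x)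
      = (ubar^2/2 * t^2 + 2*(lam*A)*t*p + lam*p^2) + (ubar^2/2 * t^2 + 2*(lam*B)*t*z2 + lam*z2^2)
        + lam*(N - \<beta>^2 - 1)*z2^2"
      unfolding qf3 t_def z1_def z2_def p_def A_def B_def
      by (simp add: algebra_simps power2_eq_square)
    then show "0 \<le> x \<bullet> ((vector [vector [ubar^2, (lam *\<^sub>R vector [y1, y2] :: real^2)$1, (lam *\<^sub>R vector [y1, y2] :: real^2)$2],
                        vector [(lam *\<^sub>R vector [y1, y2] :: real^2)$1, mat2 lam (-lam*\<beta>) (-lam*\<beta>) (lam*N)$1$1, mat2 lam (-lam*\<beta>) (-lam*\<beta>) (lam*N)$1$2],
                        vector [(lam *\<^sub>R vector [y1, y2] :: real^2)$2, mat2 lam (-lam*\<beta>) (-lam*\<beta>) (lam*N)$2$1, mat2 lam (-lam*\<beta>) (-lam*\<beta>) (lam*N)$2$2]] :: real^3^3) *v x)"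
      using Q1 Q2 Q3 by linarith
  qed
  show ?thesis unfolding lmi_feasible_def Let_def
    apply (rule exI[of _ lam], rule exI[of _ "-lam*\<beta>"], rule exI[of _ "lam*N"],
       rule exI[of _ "lam *\<^sub>R vector [w1, w2]"], rule exI[of _ "lam *\<^sub>R vector [y1, y2]"],
       rule exI[of _ lam], rule exI[of _ 0])
    using HQ HD HH HP lam0 by blast
qed

theorem proposition2:
  fixes g zc rbar vbar T ubar \<alpha> \<omega> \<xi> :: real
  assumes "g > 0" and "zc > 0"
    and "\<omega> = sqrt (g / zc)"
    and "rbar > 0" and "vbar > 0" and "T > 0" and "ubar > 0"
    and "vbar = \<omega> * rbar * (cosh (\<omega> * T) + 1) / sinh (\<omega> * T)"
    and "\<xi> = rbar * \<omega> / (vbar / \<omega> - rbar)"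
    and "\<alpha> > 0"
  shows "lmi_feasible \<alpha> \<omega> T \<xi> ubar \<longleftrightarrow> \<alpha> > \<omega>"
proof -
  have w: "\<omega> > 0" and xi: "\<xi> \<ge> 0" using xi_nonneg[OF assms(1,2,3,4,6,8,9)] by auto
  show ?thesis
  proof
  assume "lmi_feasible \<alpha> \<omega> T \<xi> ubar"
  then obtain q11 q12 q22 W Y U X where
    Q: "pos_def_mat (mat2 q11 q12 q12 q22)" and
    D: "neg_def_mat (Delta \<alpha> \<omega> T \<xi> q11 q12 q22)" and
    H: "neg_def_mat (He (blk3 (\<alpha> *\<^sub>R mat2 q11 q12 q12 q22 + lipA \<omega> ** mat2 q11 q12 q12 q22 + outer2 (lipB \<omega>) W)
                             ((X - U) *\<^sub>R lipB \<omega>) (W + Y) (X - U)))"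
    unfolding lmi_feasible_def Let_def by blast
  have q11: "q11 > 0" using Q v2_nz(1) unfolding pos_def_mat_def qf2 by fastforce
  have q22: "q22 > 0" using Q v2_nz(2) unfolding pos_def_mat_def qf2 by fastforce
  have h11: "\<alpha>*q11 + q12 < 0" using H v3_nz unfolding neg_def_mat_def He_blk3 P_entries qf3
    by fastforce
  have d11: "(exp (2*(\<omega> - \<alpha>)*T) - 1) * q22
               + 4 * exp (-2*\<alpha>*T) * \<xi> * (\<xi> * q11 - exp (\<omega>*T) * q12) < 0"
    using D v2_nz(1) unfolding neg_def_mat_def Delta_def Let_def qf2 by fastforce
  show "\<alpha> > \<omega>"
  proof (rule ccontr)
    assume "\<not> \<alpha> > \<omega>"
    then have "exp (2*(\<omega> - \<alpha>)*T) \<ge> 1" using assms(6) by simp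
    from necessity[OF q11 q22 assms(10) h11 xi exp_gt_zero[of "\<omega>*T"] exp_gt_zero[of "-2*\<alpha>*T"] this] d11 show False by simp
  qed
next
  assume "\<alpha> > \<omega>"
  then show "lmi_feasible \<alpha> \<omega> T \<xi> ubar"
    using sufficiency[OF w _ xi assms(6) assms(7)] by simp
  qed
qed

end
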